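(* There is no Borel probability measure $\nu$ on $[0,1]$ that is simultaneously invariant with respect to $T$, ergodic with respect to $T$, and absolutely continuous with respect to Lebesgue measure.
   Context: Every irrational $x\in(0,1)$ has a unique representation ($\bar O^1$-expansion) $$x=\sum_{k=1}^\infty\frac{(-1)^{k-1}}{g_1(g_1+g_2)\cdots(g_1+g_2+\dots+g_k)}=:\bar O^1(g_1,g_2,\dots),\qquad g_k=g_k(x)\in\mathbb{N},$$ and every infinite sequence of positive integers yields an irrational number in $(0,1)$ this way. The shift $T$ is defined (on irrationals of $(0,1)$, a set of full Lebesgue measure) by $T(\bar O^1(g_1,g_2,g_3,\dots))=\bar O^1(g_2,g_3,\dots)$. A measure $\nu$ is $T$-invariant if $\nu(T^{-1}E)=\nu(E)$ for every Borel set $E$; it is $T$-ergodic if every Borel set $A$ with $T^{-1}A=A$ has $\nu(A)=0$ or $\nu(A)=1$. *)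

theory Defs
  imports "HOL-Probability.Probability"
begin

text \<open>The O-bar-1 expansion. Digits are indexed from 0: g 0 = g_1, g 1 = g_2, ...
  The k-th term (k from 0) is (-1)^k / (g_1 (g_1+g_2) ... (g_1+...+g_(k+1))).\<close>
definition Obar1 :: "(nat \<Rightarrow> nat) \<Rightarrow> real" where
  "Obar1 g = (\<Sum>k. (-1) ^ k / (\<Prod>i\<le>k. real (\<Sum>j\<le>i. g j)))"

text \<open>The (unique) digit sequence of x; meaningful for irrational x in (0,1).\<close>
definition Obar1_digits :: "real \<Rightarrow> (nat \<Rightarrow> nat)" where
  "Obar1_digits x = (THE g. (\<forall>k. 0 < g k) \<and> Obar1 g = x)"

text \<open>The shift T, defined on irrationals of (0,1); set to 0 on the remaining
  (Lebesgue-null) points of [0,1].\<close>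
definition Obar1_shift :: "real \<Rightarrow> real" where
  "Obar1_shift x = (if x \<in> {0<..<1} - \<rat> then Obar1 (\<lambda>k. Obar1_digits x (Suc k)) else 0)"

definition T_invariant :: "real measure \<Rightarrow> (real \<Rightarrow> real) \<Rightarrow> bool" where
  "T_invariant \<nu> T \<longleftrightarrow>
     (\<forall>E \<in> sets \<nu>. T -` E \<inter> space \<nu> \<in> sets \<nu> \<and> emeasure \<nu> (T -` E \<inter> space \<nu>) = emeasure \<nu> E)"

definition T_ergodic :: "real measure \<Rightarrow> (real \<Rightarrow> real) \<Rightarrow> bool" where
  "T_ergodic \<nu> T \<longleftrightarrow>
     (\<forall>A \<in> sets \<nu>. T -` A \<inter> space \<nu> = A \<longrightarrow> emeasure \<nu> A = 0 \<or> emeasure \<nu> A = 1)"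

end

theory Submission
  imports Defs
begin

definition Psi :: "nat \<Rightarrow> (nat \<Rightarrow> nat) \<Rightarrow> real" where
  "Psi c g = (\<Sum>k. (-1) ^ k / (\<Prod>i\<le>k. real (c + (\<Sum>j\<le>i. g j))))"

definition pos :: "(nat \<Rightarrow> nat) \<Rightarrow> bool" where "pos g \<longleftrightarrow> (\<forall>k. 0 < g k)"

definition A :: "nat \<Rightarrow> (nat \<Rightarrow> nat) \<Rightarrow> nat \<Rightarrow> real" where
  "A c g k = 1 / (\<Prod>i\<le>k. real (c + (\<Sum>j\<le>i. g j)))"

lemma Obar1_Psi: "Obar1 g = Psi 0 g"
  by (simp add: Obar1_def Psi_def)

lemma Psi_alt: "Psi c g = (\<Sum>k. (-1) ^ k * A c g k)"
  by (simp add: Psi_def A_def)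

lemma pos_shift: "pos g \<Longrightarrow> pos (\<lambda>k. g (Suc k))"
  by (simp add: pos_def)

lemma sum_ge: "pos g \<Longrightarrow> (\<Sum>j\<le>i. g j) \<ge> Suc i"
proof (induction i)
  case 0 thus ?case by (simp add: pos_def Suc_le_eq)
next
  case (Suc i)
  have "0 < g (Suc i)" using Suc.prems pos_def by auto
  thus ?case using Suc by simp
qed

lemma prod_ge: assumes "pos g" shows "(\<Prod>i\<le>k. real (c + (\<Sum>j\<le>i. g j))) \<ge> real (Suc k)"
proof (induction k)
  case 0 thus ?case using sum_ge[OF assms, of 0] by simp
next
  case (Suc k)
  have "c + (\<Sum>j\<le>Suc k. g j) \<ge> Suc (Suc k)" using sum_ge[OF assms, of "Suc k"] by simp
  hence f: "real (c + (\<Sum>j\<le>Suc k. g j)) \<ge> real (Suc (Suc k))" by (simp only: of_nat_le_iff)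
  have "(\<Prod>i\<le>Suc k. real (c + (\<Sum>j\<le>i. g j))) = (\<Prod>i\<le>k. real (c + (\<Sum>j\<le>i. g j))) * real (c + (\<Sum>j\<le>Suc k. g j))"
    by simp
  also have "\<dots> \<ge> real (Suc k) * real (Suc (Suc k))"
    by (rule mult_mono[OF Suc f], rule prod_nonneg, simp only: of_nat_0_le_iff, simp)
  also have "real (Suc k) * real (Suc (Suc k)) \<ge> real (Suc (Suc k))" by simp
  finally show ?case by simp
qed

lemma A_pos: "pos g \<Longrightarrow> 0 < A c g k"
  using prod_ge[of g k c] by (simp add: A_def)

lemma A_le: "pos g \<Longrightarrow> A c g k \<le> 1 / real (Suc k)"
  using prod_ge[of g k c] unfolding A_def by (intro divide_left_mono) auto

lemma A_Suc: "A c g (Suc k) = A (c + g 0) (\<lambda>k. g (Suc k)) k / real (c + g 0)"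
  unfolding A_def prod.atMost_Suc_shift sum.atMost_Suc_shift by (simp add: add.assoc)

lemma A_0: "A c g 0 = 1 / real (c + g 0)" by (simp add: A_def)

lemma A_mono: assumes "pos g" shows "A c g (Suc k) \<le> A c g k"
proof -
  have "A c g (Suc k) = A c g k / real (c + (\<Sum>j\<le>Suc k. g j))"
    by (simp add: A_def)
  moreover have "c + (\<Sum>j\<le>Suc k. g j) \<ge> 1" using sum_ge[OF assms, of "Suc k"] by simp
  hence "real (c + (\<Sum>j\<le>Suc k. g j)) \<ge> 1" by (metis of_nat_1 of_nat_le_iff)
  ultimately show ?thesis using A_pos[OF assms, of c k]
    using divide_left_mono[of 1 "real (c + (\<Sum>j\<le>Suc k. g j))" "A c g k"] by simp
qed

lemma A_lim: assumes "pos g" shows "A c g \<longlonglongrightarrow> 0"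
proof (rule Lim_null_comparison[OF _ LIMSEQ_inverse_real_of_nat])
  show "\<forall>\<^sub>F k in sequentially. norm (A c g k) \<le> inverse (real (Suc k))"
    using A_le[OF assms] A_pos[OF assms] by (simp add: inverse_eq_divide less_imp_le)
qed

lemma Leib: assumes "pos g"
  shows "summable (\<lambda>k. (-1)^k * A c g k)" "0 \<le> Psi c g" "Psi c g \<le> 1 / real (c + g 0)"
proof -
  note L = summable_Leibniz'[where a="A c g", OF A_lim[OF assms] less_imp_le[OF A_pos[OF assms]] A_mono[OF assms]]
  show "summable (\<lambda>k. (-1)^k * A c g k)" by (rule L(1))
  show "0 \<le> Psi c g" using L(2)[of 0] by (simp add: Psi_alt)
  show "Psi c g \<le> 1 / real (c + g 0)" using L(4)[of 0] by (simp add: Psi_alt A_0)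
qed

lemma aux_eq: fixes X S S2 d :: real
  shows "X = S - 1 / d \<Longrightarrow> X = Y \<Longrightarrow> Y = S2 * (- 1 / d) \<Longrightarrow> S = (1 - S2) / d"
  by (simp add: diff_divide_distrib)

lemma Psi_rec: assumes "pos g"
  shows "Psi c g = (1 - Psi (c + g 0) (\<lambda>k. g (Suc k))) / real (c + g 0)"
proof -
  let ?h = "\<lambda>k. g (Suc k)"
  have s: "summable (\<lambda>k. (-1)^k * A c g k)" by (rule Leib(1)[OF assms])
  have s2: "summable (\<lambda>k. (-1)^k * A (c + g 0) ?h k)" by (rule Leib(1)[OF pos_shift[OF assms]])
  have "(\<Sum>k. (-1)^(Suc k) * A c g (Suc k)) = (\<Sum>k. (-1)^k * A c g k) - (-1)^0 * A c g 0"
    by (rule suminf_split_head[OF s])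
  also have "(-1)^0 * A c g 0 = 1 / real (c + g 0)" unfolding A_0 by simp
  finally have f1: "(\<Sum>k. (-1)^(Suc k) * A c g (Suc k)) = (\<Sum>k. (-1)^k * A c g k) - 1 / real (c + g 0)" .
  have f2: "(\<Sum>k. (-1)^(Suc k) * A c g (Suc k)) = (\<Sum>k. ((-1)^k * A (c + g 0) ?h k) * (- 1 / real (c + g 0)))"
    unfolding A_Suc power_Suc by (intro suminf_cong) (simp add: divide_simps)
  have f3: "(\<Sum>k. ((-1)^k * A (c + g 0) ?h k) * (- 1 / real (c + g 0))) = (\<Sum>k. (-1)^k * A (c + g 0) ?h k) * (- 1 / real (c + g 0))"
    by (rule suminf_mult2[symmetric, OF s2])
  show ?thesis unfolding Psi_alt using aux_eq[OF f1 f2 f3] .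
qed

lemma alg1: fixes d y :: real assumes "0 < d" "y \<le> 1 / (d + 1)" shows "1 / (d + 1) \<le> (1 - y) / d"
proof -
  have "1 - y \<ge> d / (d + 1)" using assms by (simp add: field_simps)
  thus ?thesis using assms by (simp add: field_simps)
qed

lemma alg2: fixes d y :: real assumes "0 < d" "y < 1 / (d + 1)" shows "1 / (d + 1) < (1 - y) / d"
proof -
  have "1 - y > d / (d + 1)" using assms by (simp add: field_simps)
  thus ?thesis using assms by (simp add: field_simps)
qed

lemma pos0: "pos g \<Longrightarrow> 0 < g 0" by (simp add: pos_def)

lemma recip_mono: "(0::real) < a \<Longrightarrow> a \<le> b \<Longrightarrow> 1 / b \<le> 1 / a"
  by (simp add: frac_le)

lemma Psi_low_weak: assumes "pos g" shows "1 / real (c + g 0 + 1) \<le> Psi c g"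
proof -
  let ?d = "real (c + g 0)"
  have d: "0 < ?d" using pos0[OF assms] by simp
  have "Psi (c + g 0) (\<lambda>k. g (Suc k)) \<le> 1 / real (c + g 0 + g (Suc 0))"
    using Leib(3)[OF pos_shift[OF assms], of "c + g 0"] by simp
  also have "\<dots> \<le> 1 / (?d + 1)"
    using pos0[OF pos_shift[OF assms]] by (intro recip_mono) auto
  finally have "1 / (?d + 1) \<le> (1 - Psi (c + g 0) (\<lambda>k. g (Suc k))) / ?d" by (rule alg1[OF d])
  thus ?thesis using Psi_rec[OF assms, of c] by (simp add: add.commute)
qed

lemma Psi_pos: assumes "pos g" shows "0 < Psi c g"
proof -
  have "0 < 1 / real (c + g 0 + 1)" by simp
  thus ?thesis using Psi_low_weak[OF assms, of c] by linarith
qed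

lemma Psi_up: assumes "pos g" shows "Psi c g < 1 / real (c + g 0)"
proof -
  have d: "0 < real (c + g 0)" using pos0[OF assms] by simp
  have "0 < Psi (c + g 0) (\<lambda>k. g (Suc k))" by (rule Psi_pos[OF pos_shift[OF assms]])
  thus ?thesis using Psi_rec[OF assms, of c] d by (simp add: divide_strict_right_mono)
qed

lemma Psi_low: assumes "pos g" shows "1 / real (c + g 0 + 1) < Psi c g"
proof -
  let ?d = "real (c + g 0)"
  have d: "0 < ?d" using pos0[OF assms] by simp
  have "Psi (c + g 0) (\<lambda>k. g (Suc k)) < 1 / real (c + g 0 + g (Suc 0))"
    using Psi_up[OF pos_shift[OF assms], of "c + g 0"] by simp
  also have "\<dots> \<le> 1 / (?d + 1)"
    using pos0[OF pos_shift[OF assms]] by (intro recip_mono) auto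
  finally have "1 / (?d + 1) < (1 - Psi (c + g 0) (\<lambda>k. g (Suc k))) / ?d" by (rule alg2[OF d])
  thus ?thesis using Psi_rec[OF assms, of c] by (simp add: add.commute)
qed

lemma Psi_head: assumes "pos g" "pos h" "Psi c g = Psi c h" shows "g 0 = h 0"
proof (rule ccontr)
  assume ne: "g 0 \<noteq> h 0"
  have key: "Psi c v < Psi c u" if "pos u" "pos v" "u 0 < v 0" for u v
  proof -
    have "Psi c v < 1 / real (c + v 0)" by (rule Psi_up[OF that(2)])
    also have "\<dots> \<le> 1 / real (c + u 0 + 1)" using that by (intro recip_mono) auto
    also have "\<dots> < Psi c u" by (rule Psi_low[OF that(1)])
    finally show ?thesis .
  qed
  show False using ne key[OF assms(1,2)] key[OF assms(2,1)] assms(3) by linarith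
qed

lemma canc: fixes X Y d :: real shows "(1 - X) / d = (1 - Y) / d \<Longrightarrow> d \<noteq> 0 \<Longrightarrow> X = Y"
  by simp

lemma Psi_inj: "pos g \<Longrightarrow> pos h \<Longrightarrow> Psi c g = Psi c h \<Longrightarrow> g n = h n"
proof (induction n arbitrary: c g h)
  case 0 thus ?case using Psi_head by blast
next
  case (Suc n)
  have h0: "g 0 = h 0" using Psi_head Suc.prems by blast
  have "Psi (c + g 0) (\<lambda>k. g (Suc k)) = Psi (c + g 0) (\<lambda>k. h (Suc k))"
  proof (rule canc)
    show "real (c + g 0) \<noteq> 0" using pos0[OF Suc.prems(1)] by simp
    note e1 = Psi_rec[OF Suc.prems(1), of c]
    note e2 = Psi_rec[OF Suc.prems(2), of c, unfolded h0[symmetric]]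
    show "(1 - Psi (c + g 0) (\<lambda>k. g (Suc k))) / real (c + g 0) = (1 - Psi (c + g 0) (\<lambda>k. h (Suc k))) / real (c + g 0)"
      using Suc.prems(3) unfolding e1 e2 .
  qed
  from Suc.IH[OF pos_shift[OF Suc.prems(1)] pos_shift[OF Suc.prems(2)] this] show ?case .
qed

lemma Psi_inj': "pos g \<Longrightarrow> pos h \<Longrightarrow> Psi c g = Psi c h \<Longrightarrow> g = h"
  using Psi_inj by blast

fun al :: "nat \<Rightarrow> nat list \<Rightarrow> real" where
  "al c [] = 0"
| "al c (m # p) = (1 - al (c + m) p) / real (c + m)"

fun be :: "nat \<Rightarrow> nat list \<Rightarrow> real" where
  "be c [] = 1"
| "be c (m # p) = - be (c + m) p / real (c + m)"

lemma decomp: "pos g \<Longrightarrow> Psi c g = al c (map g [0..<n]) + be c (map g [0..<n]) * Psi (c + (\<Sum>i<n. g i)) (\<lambda>k. g (k + n))"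
proof (induction n arbitrary: c g)
  case 0 thus ?case by simp
next
  case (Suc n)
  let ?h = "\<lambda>k. g (Suc k)"
  have IH: "Psi (c + g 0) ?h = al (c + g 0) (map ?h [0..<n]) + be (c + g 0) (map ?h [0..<n]) * Psi (c + g 0 + (\<Sum>i<n. ?h i)) (\<lambda>k. ?h (k + n))"
    by (rule Suc.IH[OF pos_shift[OF Suc.prems]])
  have s: "c + g 0 + (\<Sum>i<n. ?h i) = c + (\<Sum>i<Suc n. g i)" by (simp only: sum.lessThan_Suc_shift add.assoc)
  have f: "(\<lambda>k. ?h (k + n)) = (\<lambda>k. g (k + Suc n))" by simp
  show ?case unfolding map_upt_Suc al.simps be.simps Psi_rec[OF Suc.prems, of c] IH s f
    by (simp add: diff_divide_distrib add_divide_distrib)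
qed

lemma al_be_append: "al c (p @ q) + be c (p @ q) * t = al c p + be c p * (al (c + sum_list p) q + be (c + sum_list p) q * t)"
proof (induction p arbitrary: c)
  case Nil thus ?case by simp
next
  case (Cons m p)
  have "al c ((m # p) @ q) + be c ((m # p) @ q) * t = (1 - (al (c + m) (p @ q) + be (c + m) (p @ q) * t)) / real (c + m)"
    by (simp add: diff_divide_distrib add_divide_distrib)
  also have "\<dots> = (1 - (al (c + m) p + be (c + m) p * (al (c + m + sum_list p) q + be (c + m + sum_list p) q * t))) / real (c + m)"
    by (simp only: Cons.IH)
  also have "\<dots> = al c (m # p) + be c (m # p) * (al (c + sum_list (m # p)) q + be (c + sum_list (m # p)) q * t)"
    by (simp add: diff_divide_distrib add_divide_distrib add.assoc)
  finally show ?case .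
qed

lemma be_nz: "\<forall>m\<in>set p. 0 < m \<Longrightarrow> be c p \<noteq> 0"
  by (induction p arbitrary: c) auto

primrec st :: "real \<Rightarrow> nat \<Rightarrow> nat \<times> real" where
  "st x 0 = (0, x)"
| "st x (Suc n) = (nat \<lfloor>1 / snd (st x n)\<rfloor>, 1 - real (nat \<lfloor>1 / snd (st x n)\<rfloor>) * snd (st x n))"

lemma step_lemma:
  fixes y :: real and c :: nat
  assumes y: "y \<notin> \<rat>" "0 < y" "y < 1 / (real c + 1)"
  defines "c' \<equiv> nat \<lfloor>1 / y\<rfloor>"
  shows "c + 1 \<le> c'" "1 / (real c' + 1) < y" "y < 1 / real c'"
        "1 - real c' * y \<notin> \<rat>" "0 < 1 - real c' * y" "1 - real c' * y < 1 / (real c' + 1)"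
proof -
  have iy: "1 / y > real c + 1" using y by (simp add: field_simps)
  have irr: "1 / y \<notin> \<rat>"
  proof
    assume "1 / y \<in> \<rat>" hence "1 / (1 / y) \<in> \<rat>" by (rule Rats_divide[OF Rats_1])
    thus False using y by simp
  qed
  have fl: "real_of_int \<lfloor>1 / y\<rfloor> \<le> 1 / y" "1 / y < real_of_int \<lfloor>1 / y\<rfloor> + 1" by linarith+
  have ne: "real_of_int \<lfloor>1 / y\<rfloor> \<noteq> 1 / y" using irr by (metis Rats_of_int)
  have fge: "\<lfloor>1 / y\<rfloor> \<ge> int c + 1" using iy by linarith
  hence cc: "real c' = real_of_int \<lfloor>1 / y\<rfloor>" unfolding c'_def by simp
  show "c + 1 \<le> c'" using fge unfolding c'_def by linarith
  have lt: "real c' < 1 / y" using fl ne cc by linarith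
  have gt: "1 / y < real c' + 1" using fl cc by linarith
  have c'pos: "real c' > 0" using iy lt gt cc fge by simp
  show "y < 1 / real c'" using lt y c'pos by (simp add: field_simps)
  show yl: "1 / (real c' + 1) < y" using gt y c'pos by (simp add: field_simps)
  show "1 - real c' * y \<notin> \<rat>"
  proof
    assume r: "1 - real c' * y \<in> \<rat>"
    have "1 - (1 - real c' * y) \<in> \<rat>" by (rule Rats_diff[OF Rats_1 r])
    hence "(1 - (1 - real c' * y)) / real c' \<in> \<rat>" by (rule Rats_divide[OF _ Rats_of_nat])
    thus False using y c'pos by simp
  qed
  show "0 < 1 - real c' * y" using lt y c'pos by (simp add: field_simps)
  have h: "1 < y * (real c' + 1)" using yl c'pos by (simp add: field_simps)
  have "real c' * 1 < real c' * (y * (real c' + 1))" by (rule mult_strict_left_mono[OF h c'pos])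
  thus "1 - real c' * y < 1 / (real c' + 1)" using c'pos by (simp add: field_simps)
qed

definition cs where "cs x n = fst (st x n)"
definition ys where "ys x n = snd (st x n)"

lemma cs_Suc: "cs x (Suc n) = nat \<lfloor>1 / ys x n\<rfloor>" by (simp add: cs_def ys_def)
lemma ys_Suc: "ys x (Suc n) = 1 - real (cs x (Suc n)) * ys x n" by (simp add: cs_def ys_def)
lemma cs_0: "cs x 0 = 0" by (simp add: cs_def)
lemma ys_0: "ys x 0 = x" by (simp add: ys_def)

lemma st_inv: assumes "x \<in> {0<..<1} - \<rat>"
  shows "ys x n \<notin> \<rat> \<and> 0 < ys x n \<and> ys x n < 1 / (real (cs x n) + 1)"
proof (induction n)
  case 0 thus ?case using assms by (simp add: cs_0 ys_0)
next
  case (Suc n)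
  note S = step_lemma[of "ys x n" "cs x n"]
  show ?case unfolding ys_Suc cs_Suc using S(4,5,6) Suc by auto
qed

lemma cs_step: assumes "x \<in> {0<..<1} - \<rat>" shows "cs x n + 1 \<le> cs x (Suc n)"
  using step_lemma(1)[of "ys x n" "cs x n"] st_inv[OF assms, of n] by (simp add: cs_Suc)

lemma ys_bounds: assumes "x \<in> {0<..<1} - \<rat>"
  shows "1 / (real (cs x (Suc n)) + 1) < ys x n" "ys x n < 1 / real (cs x (Suc n))"
  using step_lemma(2,3)[of "ys x n" "cs x n"] st_inv[OF assms, of n] by (simp_all add: cs_Suc)

definition dg where "dg x k = cs x (Suc k) - cs x k"

lemma dg_pos: assumes "x \<in> {0<..<1} - \<rat>" shows "pos (dg x)"
proof -
  have "0 < dg x k" for k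
  proof -
    have "cs x k + 1 \<le> cs x (Suc k)" by (rule cs_step[OF assms])
    thus ?thesis unfolding dg_def by simp
  qed
  thus ?thesis unfolding pos_def by blast
qed

lemma dg_sum: assumes "x \<in> {0<..<1} - \<rat>" shows "(\<Sum>i<n. dg x i) = cs x n"
proof (induction n)
  case 0 thus ?case by (simp add: cs_0)
next
  case (Suc n) thus ?case using cs_step[OF assms, of n] by (simp add: dg_def)
qed

lemma sum_list_map_upt: "sum_list (map g [0..<n]) = (\<Sum>i<n. g i)"
  by (induction n) auto

lemma cs_ge: assumes "x \<in> {0<..<1} - \<rat>" shows "n \<le> cs x n"
proof (induction n)
  case 0 thus ?case by simp
next
  case (Suc n) thus ?case using cs_step[OF assms, of n] by simp
qed

lemma x_repr: assumes "x \<in> {0<..<1} - \<rat>"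
  shows "x = al 0 (map (dg x) [0..<n]) + be 0 (map (dg x) [0..<n]) * ys x n"
proof (induction n)
  case 0 thus ?case by (simp add: ys_0)
next
  case (Suc n)
  let ?P = "map (dg x) [0..<n]"
  have sl: "sum_list ?P = cs x n" using dg_sum[OF assms] by (simp add: sum_list_map_upt)
  have cn: "cs x n + dg x n = cs x (Suc n)" using cs_step[OF assms, of n] by (simp add: dg_def)
  have cp: "real (cs x (Suc n)) > 0" using cs_step[OF assms, of n] by simp
  have "al 0 (map (dg x) [0..<Suc n]) + be 0 (map (dg x) [0..<Suc n]) * ys x (Suc n)
      = al 0 ?P + be 0 ?P * (al (0 + sum_list ?P) [dg x n] + be (0 + sum_list ?P) [dg x n] * ys x (Suc n))"
    by (simp only: map_append upt_Suc le0 if_True list.map al_be_append)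
  also have "al (0 + sum_list ?P) [dg x n] + be (0 + sum_list ?P) [dg x n] * ys x (Suc n) = ys x n"
    unfolding sl using cn cp by (simp add: ys_Suc field_simps)
  finally show ?case using Suc by simp
qed

lemma be_le: "\<forall>m\<in>set p. 0 < m \<Longrightarrow> \<bar>be c p\<bar> \<le> 1"
proof (induction p arbitrary: c)
  case Nil thus ?case by simp
next
  case (Cons m p)
  have "\<bar>be (c + m) p\<bar> \<le> 1" using Cons by simp
  moreover have "real (c + m) \<ge> 1" using Cons.prems by simp
  ultimately have "\<bar>be (c + m) p\<bar> / real (c + m) \<le> 1 / real (c + m)" "1 / real (c + m) \<le> 1"
    by (auto intro: divide_right_mono)
  hence "\<bar>be (c + m) p\<bar> / real (c + m) \<le> 1" by linarith
  thus ?case by (simp add: abs_div_pos)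
qed

lemma existence: assumes "x \<in> {0<..<1} - \<rat>" shows "Psi 0 (dg x) = x"
proof -
  let ?g = "dg x"
  have pg: "pos ?g" by (rule dg_pos[OF assms])
  have bnd: "\<bar>Psi 0 ?g - x\<bar> \<le> 1 / (real n + 1)" for n
  proof -
    let ?P = "map ?g [0..<n]"
    let ?Q = "Psi (cs x n) (\<lambda>k. ?g (k + n))"
    have pq: "pos (\<lambda>k. ?g (k + n))" using pg by (simp add: pos_def)
    have d: "Psi 0 ?g = al 0 ?P + be 0 ?P * ?Q" using decomp[OF pg, of 0 n] dg_sum[OF assms] by simp
    have bl: "\<bar>be 0 ?P\<bar> \<le> 1" using pg by (intro be_le) (auto simp: pos_def)
    have q1: "0 \<le> ?Q" using Leib(2)[OF pq] .
    have "?Q \<le> 1 / real (cs x n + ?g n)" using Leib(3)[OF pq, of "cs x n"] by simp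
    also have "\<dots> \<le> 1 / (real (cs x n) + 1)" using pg unfolding pos_def
      by (intro recip_mono) (auto simp: Suc_le_eq)
    finally have q2: "?Q \<le> 1 / (real (cs x n) + 1)" .
    have y: "0 < ys x n" "ys x n < 1 / (real (cs x n) + 1)" using st_inv[OF assms, of n] by auto
    have "\<bar>?Q - ys x n\<bar> \<le> 1 / (real (cs x n) + 1)" using q1 q2 y by linarith
    also have "\<dots> \<le> 1 / (real n + 1)" using cs_ge[OF assms, of n] by (intro recip_mono) auto
    finally have qy: "\<bar>?Q - ys x n\<bar> \<le> 1 / (real n + 1)" .
    have "\<bar>Psi 0 ?g - x\<bar> = \<bar>be 0 ?P\<bar> * \<bar>?Q - ys x n\<bar>"
      using d x_repr[OF assms, of n] by (simp add: abs_mult[symmetric] algebra_simps)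
    also have "\<dots> \<le> 1 * (1 / (real n + 1))" by (rule mult_mono[OF bl qy]) auto
    finally show ?thesis by simp
  qed
  show ?thesis
  proof (rule ccontr)
    assume "Psi 0 ?g \<noteq> x"
    hence "\<bar>Psi 0 ?g - x\<bar> > 0" by simp
    then obtain n where "inverse (real (Suc n)) < \<bar>Psi 0 ?g - x\<bar>" using reals_Archimedean by blast
    thus False using bnd[of n] by (simp add: inverse_eq_divide add.commute)
  qed
qed

lemma digits_eq: assumes "pos g" shows "Obar1_digits (Psi 0 g) = g"
  unfolding Obar1_digits_def Obar1_Psi
proof (rule the_equality)
  show "(\<forall>k. 0 < g k) \<and> Psi 0 g = Psi 0 g" using assms by (simp add: pos_def)
  show "\<And>h. (\<forall>k. 0 < h k) \<and> Psi 0 h = Psi 0 g \<Longrightarrow> h = g"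
    using Psi_inj' assms unfolding pos_def by blast
qed

lemma shift_eq: assumes "pos g" "Psi 0 g \<in> {0<..<1} - \<rat>"
  shows "Obar1_shift (Psi 0 g) = Psi 0 (\<lambda>k. g (Suc k))"
  using assms by (simp add: Obar1_shift_def digits_eq Obar1_Psi)

definition F :: "nat \<Rightarrow> nat list \<Rightarrow> real \<Rightarrow> real" where "F c p t = al c p + be c p * t"
definition Ic where "Ic c p = F c p ` {0<..<1 / (real (c + sum_list p) + 1)}"
definition Jc where "Jc K c p = F c p ` {1 / (real (c + sum_list p + K) + 1) .. 1 / (real (c + sum_list p) + 1)} \<inter> Ic c p"

abbreviation pl :: "nat list \<Rightarrow> bool" where "pl p \<equiv> (\<forall>m\<in>set p. 0 < m)"

lemma F_cons: "F c (m # p) t = (1 - F (c + m) p t) / real (c + m)"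
  by (simp add: F_def diff_divide_distrib add_divide_distrib)

lemma alg3: fixes d z :: real assumes "1 \<le> d" "0 < z" "z < 1 / (d + 1)"
  shows "1 / (d + 1) < (1 - z) / d" "(1 - z) / d < 1 / d"
  using alg2[of d z] assms by (auto simp: divide_strict_right_mono)

lemma Ic_sub: "pl p \<Longrightarrow> Ic c p \<subseteq> {0<..<1 / (real c + 1)}"
proof (induction p arbitrary: c)
  case Nil thus ?case by (auto simp: Ic_def F_def)
next
  case (Cons m p)
  show ?case
  proof
    fix x assume "x \<in> Ic c (m # p)"
    then obtain t where t: "t \<in> {0<..<1 / (real (c + m + sum_list p) + 1)}" and x: "x = F c (m # p) t"
      unfolding Ic_def by (auto simp: add.assoc)
    have z: "F (c + m) p t \<in> Ic (c + m) p" unfolding Ic_def using t by auto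
    have "pl p" using Cons.prems by simp
    hence "Ic (c + m) p \<subseteq> {0<..<1 / (real (c + m) + 1)}" by (rule Cons.IH)
    hence z2: "F (c + m) p t \<in> {0<..<1 / (real (c + m) + 1)}" using z by blast
    have d: "1 \<le> real (c + m)" using Cons.prems by simp
    note a = alg3[OF d, of "F (c + m) p t"]
    have "1 / (real (c + m)) \<le> 1 / (real c + 1)" using Cons.prems by (intro recip_mono) auto
    moreover have "0 < 1 / (real (c + m) + 1)" by simp
    ultimately show "x \<in> {0<..<1 / (real c + 1)}" using a z2 unfolding x F_cons by auto
  qed
qed

lemma Ic_cons: assumes "pl (m # p)" "x \<in> Ic c (m # p)"
  shows "1 / (real (c + m) + 1) < x" "x < 1 / real (c + m)" "1 - real (c + m) * x \<in> Ic (c + m) p"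
proof -
  obtain t where t: "t \<in> {0<..<1 / (real (c + m + sum_list p) + 1)}" and x: "x = F c (m # p) t"
    using assms(2) unfolding Ic_def by (auto simp: add.assoc)
  have z: "F (c + m) p t \<in> Ic (c + m) p" unfolding Ic_def using t by auto
  hence z2: "F (c + m) p t \<in> {0<..<1 / (real (c + m) + 1)}" using Ic_sub[of p "c + m"] assms(1) by auto
  have d: "1 \<le> real (c + m)" using assms(1) by simp
  note a = alg3[OF d, of "F (c + m) p t"]
  show "1 / (real (c + m) + 1) < x" "x < 1 / real (c + m)" using a z2 unfolding x F_cons by auto
  have "1 - real (c + m) * x = F (c + m) p t" unfolding x F_cons using d by simp
  thus "1 - real (c + m) * x \<in> Ic (c + m) p" using z by simp
qed

lemma Ic_disj: "pl p \<Longrightarrow> pl q \<Longrightarrow> length p = length q \<Longrightarrow> x \<in> Ic c p \<Longrightarrow> x \<in> Ic c q \<Longrightarrow> p = q"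
proof (induction p arbitrary: c q x)
  case Nil thus ?case by simp
next
  case (Cons m p)
  then obtain m' q' where q: "q = m' # q'" by (cases q) auto
  note A = Ic_cons[OF Cons.prems(1) Cons.prems(4)]
  note B = Ic_cons[OF Cons.prems(2)[unfolded q] Cons.prems(5)[unfolded q]]
  have mm: "m = m'"
  proof (rule ccontr)
    assume "m \<noteq> m'"
    hence "m < m' \<or> m' < m" by auto
    thus False
    proof
      assume "m < m'"
      hence "1 / real (c + m') \<le> 1 / (real (c + m) + 1)" by (intro recip_mono) auto
      thus False using A(1) B(2) by linarith
    next
      assume "m' < m"
      hence "1 / real (c + m) \<le> 1 / (real (c + m') + 1)" by (intro recip_mono) auto
      thus False using A(2) B(1) by linarith
    qed
  qed
  have "p = q'" using Cons.IH[where q=q' and c="c + m" and x="1 - real (c + m) * x"] A(3) B(3) Cons.prems q mm by auto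
  thus ?case using q mm by simp
qed

lemma img_open: fixes al be a b :: real assumes "be \<noteq> 0"
  shows "(\<lambda>t. al + be * t) ` {a<..<b} = (if 0 < be then {al + be * a<..<al + be * b} else {al + be * b<..<al + be * a})"
proof (cases "0 < be")
  case True
  have "(\<lambda>t. al + be * t) ` {a<..<b} = {al + be * a<..<al + be * b}"
  proof
    show "(\<lambda>t. al + be * t) ` {a<..<b} \<subseteq> {al + be * a<..<al + be * b}" using True by auto
    show "{al + be * a<..<al + be * b} \<subseteq> (\<lambda>t. al + be * t) ` {a<..<b}"
    proof
      fix x assume x: "x \<in> {al + be * a<..<al + be * b}"
      have "(x - al) / be \<in> {a<..<b}" using x True by (auto simp: field_simps)
      moreover have "x = al + be * ((x - al) / be)" using True by simp
      ultimately show "x \<in> (\<lambda>t. al + be * t) ` {a<..<b}" by blast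
    qed
  qed
  thus ?thesis using True by simp
next
  case False
  hence neg: "be < 0" using assms by simp
  have "(\<lambda>t. al + be * t) ` {a<..<b} = {al + be * b<..<al + be * a}"
  proof
    show "(\<lambda>t. al + be * t) ` {a<..<b} \<subseteq> {al + be * b<..<al + be * a}" using neg by auto
    show "{al + be * b<..<al + be * a} \<subseteq> (\<lambda>t. al + be * t) ` {a<..<b}"
    proof
      fix x assume x: "x \<in> {al + be * b<..<al + be * a}"
      have "(x - al) / be \<in> {a<..<b}" using x neg by (auto simp: field_simps)
      moreover have "x = al + be * ((x - al) / be)" using neg by simp
      ultimately show "x \<in> (\<lambda>t. al + be * t) ` {a<..<b}" by blast
    qed
  qed
  thus ?thesis using False by simp
qed

lemma img_closed: fixes al be a b :: real assumes "a \<le> b"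
  shows "(\<lambda>t. al + be * t) ` {a..b} = (if 0 \<le> be then {al + be * a..al + be * b} else {al + be * b..al + be * a})"
proof -
  have "(\<lambda>t. al + be * t) = (\<lambda>t. be * t + al)" by (simp add: add.commute)
  thus ?thesis using image_affinity_atLeastAtMost[of be al a b] assms by (simp add: add.commute)
qed

lemma meas_open: fixes al be a b :: real assumes "be \<noteq> 0" "a \<le> b"
  shows "(\<lambda>t. al + be * t) ` {a<..<b} \<in> sets lborel"
        "emeasure lborel ((\<lambda>t. al + be * t) ` {a<..<b}) = ennreal (\<bar>be\<bar> * (b - a))"
proof -
  show "(\<lambda>t. al + be * t) ` {a<..<b} \<in> sets lborel" unfolding img_open[OF assms(1)] by simp
  show "emeasure lborel ((\<lambda>t. al + be * t) ` {a<..<b}) = ennreal (\<bar>be\<bar> * (b - a))"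
  proof (cases "0 < be")
    case True
    have "al + be * a \<le> al + be * b" using True assms by (simp add: mult_left_mono)
    thus ?thesis unfolding img_open[OF assms(1)] using True by (simp add: algebra_simps)
  next
    case False
    hence "be < 0" using assms by simp
    moreover have "al + be * b \<le> al + be * a" using False assms by (simp add: mult_left_mono_neg)
    ultimately show ?thesis unfolding img_open[OF assms(1)] by (simp add: algebra_simps)
  qed
qed

lemma meas_closed: fixes al be a b :: real assumes "a \<le> b"
  shows "(\<lambda>t. al + be * t) ` {a..b} \<in> sets lborel"
        "emeasure lborel ((\<lambda>t. al + be * t) ` {a..b}) = ennreal (\<bar>be\<bar> * (b - a))"
proof -
  show "(\<lambda>t. al + be * t) ` {a..b} \<in> sets lborel" unfolding img_closed[OF assms(1)] by simp
  show "emeasure lborel ((\<lambda>t. al + be * t) ` {a..b}) = ennreal (\<bar>be\<bar> * (b - a))"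
  proof (cases "0 \<le> be")
    case True
    have "al + be * a \<le> al + be * b" using True assms by (simp add: mult_left_mono)
    thus ?thesis unfolding img_closed[OF assms(1)] using True by (simp add: algebra_simps)
  next
    case False
    hence "be < 0" using assms by simp
    moreover have "al + be * b \<le> al + be * a" using False assms by (simp add: mult_left_mono_neg)
    ultimately show ?thesis unfolding img_closed[OF assms(1)] by (simp add: algebra_simps)
  qed
qed

lemma F_fun: "F c p = (\<lambda>t. al c p + be c p * t)" by (simp add: F_def fun_eq_iff)

lemma Ic_meas: assumes "pl p"
  shows "Ic c p \<in> sets lborel" "emeasure lborel (Ic c p) = ennreal (\<bar>be c p\<bar> / (real (c + sum_list p) + 1))"
  unfolding Ic_def F_fun using meas_open[OF be_nz[OF assms], of 0 "1 / (real (c + sum_list p) + 1)" "al c p"]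
  by auto

lemma Jc_meas: assumes "pl p"
  shows "Jc K c p \<in> sets lborel"
        "emeasure lborel (Jc K c p) \<le> ennreal (\<bar>be c p\<bar> * (1 / (real (c + sum_list p) + 1) - 1 / (real (c + sum_list p + K) + 1)))"
proof -
  let ?a = "1 / (real (c + sum_list p + K) + 1)" and ?b = "1 / (real (c + sum_list p) + 1)"
  have ab: "?a \<le> ?b" by (intro recip_mono) auto
  note M = meas_closed[OF ab, of "al c p" "be c p"]
  show "Jc K c p \<in> sets lborel" unfolding Jc_def using M(1) Ic_meas(1)[OF assms] by (simp add: F_fun)
  have "emeasure lborel (Jc K c p) \<le> emeasure lborel ((\<lambda>t. al c p + be c p * t) ` {?a..?b})"
    unfolding Jc_def F_fun by (rule emeasure_mono) (use M(1) in auto)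
  thus "emeasure lborel (Jc K c p) \<le> ennreal (\<bar>be c p\<bar> * (?b - ?a))" using M(2) by simp
qed

lemma sum_list_ge: "pl p \<Longrightarrow> length p \<le> sum_list p"
  by (induction p) (auto simp: Suc_le_eq)

lemma Jc_le: assumes "pl p" "length p = n"
  shows "emeasure lborel (Jc K 0 p) \<le> ennreal (real K / (real n + 1)) * emeasure lborel (Ic 0 p)"
proof -
  let ?s = "real (sum_list p)" and ?B = "\<bar>be 0 p\<bar>"
  have sn: "real n \<le> ?s" using sum_list_ge[OF assms(1)] assms(2) by simp
  have B: "0 \<le> ?B" by simp
  have eq: "1 / (?s + 1) - 1 / (?s + real K + 1) = real K / ((?s + 1) * (?s + real K + 1))"
    by (simp add: field_simps)
  have "real K / ((?s + 1) * (?s + real K + 1)) \<le> real K / ((?s + 1) * (real n + 1))"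
    using sn by (intro divide_left_mono mult_left_mono) auto
  also have "\<dots> = real K / (real n + 1) * (1 / (?s + 1))" by simp
  finally have fin: "?B * (1 / (?s + 1) - 1 / (?s + real K + 1)) \<le> ?B * (real K / (real n + 1) * (1 / (?s + 1)))"
    unfolding eq by (rule mult_left_mono[OF _ B])
  have eq2: "?B * (real K / (real n + 1) * (1 / (?s + 1))) = real K / (real n + 1) * (?B / (?s + 1))"
    by (simp add: divide_inverse ac_simps)
  have r: "?B * (1 / (?s + 1) - 1 / (?s + real K + 1)) \<le> real K / (real n + 1) * (?B / (?s + 1))"
    unfolding eq2[symmetric] by (rule fin)
  have "emeasure lborel (Jc K 0 p) \<le> ennreal (?B * (1 / (?s + 1) - 1 / (?s + real K + 1)))"
    using Jc_meas(2)[OF assms(1), of K 0] by (simp add: add.assoc)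
  also have "\<dots> \<le> ennreal (real K / (real n + 1) * (?B / (?s + 1)))" using r by (rule ennreal_leI)
  also have "\<dots> = ennreal (real K / (real n + 1)) * ennreal (?B / (?s + 1))" by (rule ennreal_mult) auto
  also have "\<dots> = ennreal (real K / (real n + 1)) * emeasure lborel (Ic 0 p)" using Ic_meas(2)[OF assms(1), of 0] by simp
  finally show ?thesis .
qed

lemma Ubound: "emeasure lborel (\<Union>p\<in>{p. length p = n \<and> pl p}. Jc K 0 p) \<le> ennreal (real K / (real n + 1))"
proof -
  let ?P = "{p. length p = n \<and> pl p}"
  let ?e = "ennreal (real K / (real n + 1))"
  have cP: "countable ?P" by (rule countableI_type)
  have dI: "disjoint_family_on (Ic 0) ?P"
    unfolding disjoint_family_on_def using Ic_disj by blast
  have dJ: "disjoint_family_on (Jc K 0) ?P"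
    unfolding disjoint_family_on_def Jc_def using Ic_disj by blast
  have "emeasure lborel (\<Union>p\<in>?P. Jc K 0 p) = (\<integral>\<^sup>+p. emeasure lborel (Jc K 0 p) \<partial>count_space ?P)"
    by (rule emeasure_UN_countable[OF _ cP dJ]) (use Jc_meas(1)[where K=K and c=0] in blast)
  also have "\<dots> \<le> (\<integral>\<^sup>+p. ?e * emeasure lborel (Ic 0 p) \<partial>count_space ?P)"
    by (rule nn_integral_mono) (auto intro: Jc_le)
  also have "\<dots> = ?e * (\<integral>\<^sup>+p. emeasure lborel (Ic 0 p) \<partial>count_space ?P)"
    by (rule nn_integral_cmult) simp
  also have "(\<integral>\<^sup>+p. emeasure lborel (Ic 0 p) \<partial>count_space ?P) = emeasure lborel (\<Union>p\<in>?P. Ic 0 p)"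
    by (rule emeasure_UN_countable[OF _ cP dI, symmetric]) (use Ic_meas(1)[where c=0] in blast)
  finally have L: "emeasure lborel (\<Union>p\<in>?P. Jc K 0 p) \<le> ?e * emeasure lborel (\<Union>p\<in>?P. Ic 0 p)" .
  have "emeasure lborel (\<Union>p\<in>?P. Ic 0 p) \<le> emeasure lborel {0<..<(1::real)}"
    by (rule emeasure_mono) (use Ic_sub[of _ 0] in auto)
  also have "\<dots> = 1" by simp
  finally have "?e * emeasure lborel (\<Union>p\<in>?P. Ic 0 p) \<le> ?e * 1" by (rule mult_left_mono) simp
  with L show ?thesis by simp
qed

abbreviation T where "T \<equiv> Obar1_shift"

lemma T0: "T 0 = 0" by (simp add: Obar1_shift_def)
lemma T0n: "(T ^^ m) 0 = 0" by (induction m) (auto simp: T0)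

lemma mem_U:
  assumes x: "x \<in> {0..1}" and a: "0 < a" and n: "1 \<le> n" and K: "1 / a \<le> real K"
    and Tn: "a \<le> (T ^^ n) x"
  shows "x \<in> (\<Union>p\<in>{p. length p = n \<and> pl p}. Jc K 0 p)"
proof -
  have X: "x \<in> {0<..<1} - \<rat>"
  proof (rule ccontr)
    assume nx: "x \<notin> {0<..<1} - \<rat>"
    have "T x = 0" unfolding Obar1_shift_def using nx by (rule if_not_P)
    moreover obtain m where "n = Suc m" using n by (cases n) auto
    ultimately have "(T ^^ n) x = (T ^^ m) 0" by (simp only: funpow_Suc_right comp_apply)
    hence "(T ^^ n) x = 0" by (simp only: T0n)
    thus False using Tn a by simp
  qed
  define g where "g = dg x"
  have pg: "pos g" unfolding g_def by (rule dg_pos[OF X])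
  have xg: "Psi 0 g = x" unfolding g_def by (rule existence[OF X])
  have pgk: "pos (\<lambda>i. g (i + k))" for k using pg by (simp add: pos_def)
  have claim: "(T ^^ k) x = Psi 0 (\<lambda>i. g (i + k)) \<or> (T ^^ k) x = 0" for k
  proof (induction k)
    case 0 thus ?case using xg by simp
  next
    case (Suc k)
    show ?case
    proof (cases "(T ^^ k) x = 0")
      case True thus ?thesis by (simp add: T0)
    next
      case False
      hence e: "(T ^^ k) x = Psi 0 (\<lambda>i. g (i + k))" using Suc by simp
      show ?thesis
      proof (cases "Psi 0 (\<lambda>i. g (i + k)) \<in> {0<..<1} - \<rat>")
        case True
        have "T (Psi 0 (\<lambda>i. g (i + k))) = Psi 0 (\<lambda>i. g (Suc i + k))"
          using shift_eq[OF pgk True] by simp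
        thus ?thesis using e by simp
      next
        case False
        have "T (Psi 0 (\<lambda>i. g (i + k))) = 0" unfolding Obar1_shift_def using False by (rule if_not_P)
        thus ?thesis using e by simp
      qed
    qed
  qed
  let ?h = "\<lambda>i. g (i + n)"
  have Tnx: "(T ^^ n) x = Psi 0 ?h" using claim[of n] Tn a by auto
  have "a < 1 / real (g n)" using Psi_up[OF pgk[of n], of 0] Tnx Tn by simp
  hence "real (g n) < 1 / a" using a pg unfolding pos_def by (simp add: field_simps)
  hence gK: "g n \<le> K" using K by linarith
  define s where "s = (\<Sum>i<n. g i)"
  define p where "p = map g [0..<n]"
  have pp: "pl p" using pg unfolding p_def pos_def by auto
  have lp: "length p = n" by (simp add: p_def)
  have sp: "sum_list p = s" unfolding p_def s_def by (rule sum_list_map_upt)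
  define Q where "Q = Psi s ?h"
  have xQ: "x = F 0 p Q" using decomp[OF pg, of 0 n] xg unfolding F_def Q_def p_def s_def by simp
  have q1: "1 / real (s + g n + 1) < Q" using Psi_low[OF pgk[of n], of s] unfolding Q_def by simp
  have q2: "Q < 1 / real (s + g n)" using Psi_up[OF pgk[of n], of s] unfolding Q_def by simp
  have "1 / (real (0 + s + K) + 1) \<le> 1 / real (s + g n + 1)" using gK by (intro recip_mono) auto
  hence Q1: "1 / (real (0 + s + K) + 1) \<le> Q" using q1 by linarith
  have "1 / real (s + g n) \<le> 1 / (real (0 + s) + 1)" using pg unfolding pos_def
    by (intro recip_mono) (auto simp: Suc_le_eq)
  hence Q2: "Q < 1 / (real (0 + s) + 1)" using q2 by linarith
  have "0 < 1 / real (s + g n + 1)" by simp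
  hence Q0: "0 < Q" using q1 by linarith
  have "x \<in> Ic 0 p" unfolding Ic_def xQ sp using Q0 Q2 by auto
  moreover have "x \<in> F 0 p ` {1 / (real (0 + sum_list p + K) + 1) .. 1 / (real (0 + sum_list p) + 1)}"
    unfolding xQ sp using Q1 Q2 by auto
  ultimately have "x \<in> Jc K 0 p" unfolding Jc_def by auto
  thus ?thesis using pp lp by blast
qed

lemma geo_bound: fixes K :: real assumes "0 \<le> K"
  shows "(\<Sum>k. ennreal (K / (real (2 ^ (k + j)) + 1))) \<le> ennreal (2 * K / 2 ^ j)"
proof -
  have s: "summable (\<lambda>k. K / 2 ^ j * (1 / 2) ^ k)" by (intro summable_mult summable_geometric) simp
  have "(\<Sum>k. ennreal (K / (real (2 ^ (k + j)) + 1))) \<le> (\<Sum>k. ennreal (K / 2 ^ j * (1 / 2) ^ k))"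
  proof (intro suminf_le summableI allI ennreal_leI)
    fix k
    have "K / (real (2 ^ (k + j)) + 1) \<le> K / 2 ^ (k + j)" using assms
      by (intro divide_left_mono mult_pos_pos) (auto intro: add_pos_pos)
    also have "\<dots> = K / 2 ^ j * (1 / 2) ^ k" by (simp add: power_add power_one_over field_simps)
    finally show "K / (real (2 ^ (k + j)) + 1) \<le> K / 2 ^ j * (1 / 2) ^ k" .
  qed
  also have "\<dots> = ennreal (\<Sum>k. K / 2 ^ j * (1 / 2) ^ k)"
    by (rule suminf_ennreal2[OF _ s]) (use assms in simp)
  also have "(\<Sum>k. K / 2 ^ j * (1 / 2) ^ k) = K / 2 ^ j * (\<Sum>k. (1 / 2 :: real) ^ k)"
    by (rule suminf_mult) (rule summable_geometric, simp)
  also have "(\<Sum>k. (1 / 2 :: real) ^ k) = 2" using suminf_geometric[of "1/2 :: real"] by simp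
  finally show ?thesis by (simp add: mult.commute)
qed

lemma main_E:
  fixes \<nu> :: "real measure" and a :: real
  assumes sets: "sets \<nu> = sets (restrict_space borel {0..1::real})" and sp: "space \<nu> = {0..1}"
    and prob: "prob_space \<nu>" and inv: "T_invariant \<nu> Obar1_shift"
    and ac: "absolutely_continuous (restrict_space lborel {0..1}) \<nu>"
    and a: "0 < a"
  shows "emeasure \<nu> {a..1} = 0"
proof -
  let ?S = "{0..1::real}"
  let ?E = "{a..1::real}"
  have Sb: "?S \<inter> space borel \<in> sets borel" by simp
  have E: "?E \<in> sets \<nu>" unfolding sets sets_restrict_space_iff[OF Sb] using a by auto
  define Pre where "Pre = rec_nat ?E (\<lambda>_ A. T -` A \<inter> ?S)"
  have Pre0: "Pre 0 = ?E" and PreS: "\<And>n. Pre (Suc n) = T -` Pre n \<inter> ?S" by (simp_all add: Pre_def)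
  have Pm: "Pre n \<in> sets \<nu> \<and> emeasure \<nu> (Pre n) = emeasure \<nu> ?E" for n
  proof (induction n)
    case 0 thus ?case using E Pre0 by simp
  next
    case (Suc n)
    thus ?case using inv unfolding T_invariant_def PreS sp by auto
  qed
  have PT: "x \<in> Pre n \<Longrightarrow> x \<in> ?S \<and> (T ^^ n) x \<in> ?E" for n x
  proof (induction n arbitrary: x)
    case 0 thus ?case using Pre0 a by auto
  next
    case (Suc n)
    hence "T x \<in> Pre n" "x \<in> ?S" by (auto simp: PreS)
    moreover have "(T ^^ Suc n) x = (T ^^ n) (T x)" by (simp only: funpow_Suc_right comp_apply)
    ultimately show ?case using Suc.IH by simp
  qed
  define K where "K = nat \<lceil>1 / a\<rceil>"
  have K: "1 / a \<le> real K" unfolding K_def by linarith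
  define U where "U n = (\<Union>p\<in>{p. length p = n \<and> pl p}. Jc K 0 p)" for n
  have PU: "Pre n \<subseteq> U n" if n1: "1 \<le> n" for n
  proof
    fix x assume "x \<in> Pre n"
    hence "x \<in> ?S" "(T ^^ n) x \<in> ?E" using PT by auto
    hence "x \<in> ?S" "a \<le> (T ^^ n) x" by auto
    thus "x \<in> U n" unfolding U_def by (rule mem_U[OF _ a n1 K])
  qed
  have JcB: "Jc K 0 p \<in> sets borel" if "pl p" for p using Jc_meas(1)[OF that, of K 0] by simp
  have Ub: "U n \<in> sets lborel" for n
    unfolding U_def by (rule sets.countable_UN''[OF countableI_type]) (auto intro: JcB)
  have Ule: "emeasure lborel (U n) \<le> ennreal (real K / (real n + 1))" for n
    unfolding U_def by (rule Ubound)
  define B where "B j = (\<Union>k. Pre (2 ^ (k + j)))" for j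
  define W where "W = (\<Inter>j. B j)"
  have Bm: "B j \<in> sets \<nu>" for j unfolding B_def using Pm by auto
  have Wm: "W \<in> sets \<nu>" unfolding W_def using Bm by auto
  have dec: "decseq B" unfolding decseq_Suc_iff
  proof
    fix j show "B (Suc j) \<subseteq> B j" unfolding B_def
    proof
      fix x assume "x \<in> (\<Union>k. Pre (2 ^ (k + Suc j)))"
      then obtain k where "x \<in> Pre (2 ^ (Suc k + j))" by auto
      thus "x \<in> (\<Union>k. Pre (2 ^ (k + j)))" by blast
    qed
  qed
  interpret P: prob_space \<nu> by (rule prob)
  have "(INF j. emeasure \<nu> (B j)) = emeasure \<nu> W"
    unfolding W_def by (rule INF_emeasure_decseq[OF _ dec]) (use Bm in auto)
  moreover have EB: "emeasure \<nu> ?E \<le> emeasure \<nu> (B j)" for j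
  proof -
    have "Pre (2 ^ j) \<subseteq> B j" unfolding B_def
    proof
      fix x assume "x \<in> Pre (2 ^ j)"
      hence "x \<in> Pre (2 ^ (0 + j))" by simp
      thus "x \<in> (\<Union>k. Pre (2 ^ (k + j)))" by blast
    qed
    hence "emeasure \<nu> (Pre (2 ^ j)) \<le> emeasure \<nu> (B j)" by (rule emeasure_mono[OF _ Bm])
    thus ?thesis using Pm by simp
  qed
  moreover have "emeasure \<nu> ?E \<le> (INF j. emeasure \<nu> (B j))" by (rule INF_greatest) (rule EB)
  ultimately have EW: "emeasure \<nu> ?E \<le> emeasure \<nu> W" by simp
  have WS: "W \<subseteq> ?S"
  proof
    fix x assume "x \<in> W"
    hence "x \<in> B 0" unfolding W_def by auto
    then obtain k where "x \<in> Pre (2 ^ (k + 0))" unfolding B_def by auto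
    thus "x \<in> ?S" using PT by blast
  qed
  have Wl: "W \<in> sets lborel" using Wm unfolding sets sets_restrict_space_iff[OF Sb] by simp
  have W0: "emeasure lborel W = 0"
  proof -
    have "emeasure lborel W \<le> ennreal (2 * real K / 2 ^ j)" for j
    proof -
      have "W \<subseteq> (\<Union>k. U (2 ^ (k + j)))"
      proof
        fix x assume "x \<in> W"
        hence "x \<in> B j" unfolding W_def by auto
        then obtain k where "x \<in> Pre (2 ^ (k + j))" unfolding B_def by auto
        moreover have "1 \<le> (2::nat) ^ (k + j)" by simp
        ultimately show "x \<in> (\<Union>k. U (2 ^ (k + j)))" using PU by blast
      qed
      hence "emeasure lborel W \<le> emeasure lborel (\<Union>k. U (2 ^ (k + j)))"
        by (rule emeasure_mono) (use Ub in auto)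
      also have "\<dots> \<le> (\<Sum>k. emeasure lborel (U (2 ^ (k + j))))"
        by (rule emeasure_subadditive_countably) (use Ub in auto)
      also have "\<dots> \<le> (\<Sum>k. ennreal (real K / (real (2 ^ (k + j)) + 1)))"
        by (intro suminf_le summableI allI) (rule Ule)
      also have "\<dots> \<le> ennreal (2 * real K / 2 ^ j)" by (rule geo_bound) simp
      finally show ?thesis .
    qed
    note H = this
    have "emeasure lborel W \<le> 0"
    proof (rule ennreal_le_epsilon)
      fix e :: real assume "(0::ennreal) < top" and e: "0 < e"
      obtain j where j: "(1/2 :: real) ^ j < e / (2 * real K + 1)"
        using real_arch_pow_inv[of "e / (2 * real K + 1)" "1/2"] e by auto
      have "2 * real K / 2 ^ j = (2 * real K) * (1/2) ^ j" by (simp add: power_one_over)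
      also have "\<dots> \<le> (2 * real K + 1) * (1/2) ^ j" by (intro mult_right_mono) auto
      also have "\<dots> \<le> e" using j by (simp add: field_simps)
      finally have "ennreal (2 * real K / 2 ^ j) \<le> ennreal e" by (rule ennreal_leI)
      thus "emeasure lborel W \<le> 0 + ennreal e" using H[of j] by simp
    qed
    thus ?thesis by simp
  qed
  have "W \<in> sets (restrict_space lborel ?S)"
    using Wl WS by (simp add: sets_restrict_space_iff)
  moreover have "emeasure (restrict_space lborel ?S) W = 0"
    using emeasure_restrict_space[of ?S lborel W] WS W0 by simp
  ultimately have "emeasure \<nu> W = 0" by (rule absolutely_continuousD[OF ac])
  thus ?thesis using EW by simp
qed

theorem theorem4:
  shows "\<not> (\<exists>\<nu> :: real measure.
            sets \<nu> = sets (restrict_space borel {0..1::real}) \<and>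
            space \<nu> = {0..1} \<and>
            prob_space \<nu> \<and>
            T_invariant \<nu> Obar1_shift \<and>
            T_ergodic \<nu> Obar1_shift \<and>
            absolutely_continuous (restrict_space lborel {0..1}) \<nu>)"
proof
  assume "\<exists>\<nu> :: real measure.
            sets \<nu> = sets (restrict_space borel {0..1::real}) \<and>
            space \<nu> = {0..1} \<and>
            prob_space \<nu> \<and>
            T_invariant \<nu> Obar1_shift \<and>
            T_ergodic \<nu> Obar1_shift \<and>
            absolutely_continuous (restrict_space lborel {0..1}) \<nu>"
  then obtain \<nu> :: "real measure" where sets: "sets \<nu> = sets (restrict_space borel {0..1::real})"
    and sp: "space \<nu> = {0..1}" and prob: "prob_space \<nu>" and inv: "T_invariant \<nu> Obar1_shift"
    and ac: "absolutely_continuous (restrict_space lborel {0..1}) \<nu>" by blast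
  let ?S = "{0..1::real}"
  have Sb: "?S \<inter> space borel \<in> sets borel" by simp
  have null: "{1 / real (Suc n)..1} \<in> null_sets \<nu>" for n
  proof -
    have "{1 / real (Suc n)..1} \<in> sets \<nu>" unfolding sets sets_restrict_space_iff[OF Sb]
      by (auto simp: field_simps)
    thus ?thesis using main_E[OF sets sp prob inv ac, of "1 / real (Suc n)"] by auto
  qed
  have z0: "{0::real} \<in> sets (restrict_space lborel ?S)" by (simp add: sets_restrict_space_iff)
  have "emeasure (restrict_space lborel ?S) {0} = 0"
    using emeasure_restrict_space[of ?S lborel "{0}"] by simp
  hence "emeasure \<nu> {0} = 0" by (rule absolutely_continuousD[OF ac z0])
  moreover have "{0::real} \<in> sets \<nu>" unfolding sets sets_restrict_space_iff[OF Sb] by simp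
  ultimately have n0: "{0::real} \<in> null_sets \<nu>" by (auto intro: null_setsI)
  have "(\<Union>n. {1 / real (Suc n)..1}) \<in> null_sets \<nu>" using null by (rule null_sets_UN)
  hence "{0} \<union> (\<Union>n. {1 / real (Suc n)..1}) \<in> null_sets \<nu>" by (rule null_sets.Un[OF n0])
  moreover have "{0} \<union> (\<Union>n. {1 / real (Suc n)..1}) = ?S"
  proof
    show "{0} \<union> (\<Union>n. {1 / real (Suc n)..1}) \<subseteq> ?S"
    proof (intro Un_least UN_least)
      show "{0} \<subseteq> ?S" by simp
      fix n :: nat
      have "0 \<le> 1 / real (Suc n)" by simp
      thus "{1 / real (Suc n)..1} \<subseteq> ?S" by auto
    qed
    show "?S \<subseteq> {0} \<union> (\<Union>n. {1 / real (Suc n)..1})"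
    proof
      fix x :: real assume x: "x \<in> ?S"
      show "x \<in> {0} \<union> (\<Union>n. {1 / real (Suc n)..1})"
      proof (cases "x = 0")
        case False
        hence "0 < x" using x by auto
        then obtain n where "inverse (real (Suc n)) < x" using reals_Archimedean by blast
        hence "x \<in> {1 / real (Suc n)..1}" using x by (simp add: inverse_eq_divide)
        thus ?thesis by blast
      qed simp
    qed
  qed
  ultimately have "?S \<in> null_sets \<nu>" by simp
  hence "emeasure \<nu> ?S = 0" by (rule null_setsD1)
  moreover have "emeasure \<nu> ?S = 1" using prob_space.emeasure_space_1[OF prob] sp by simp
  ultimately show False by simp
qed

end
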